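(* Suppose no agent is faulty ($f=0$), the directed graph $G=(\mathcal{V},\mathcal{E})$ on $\mathcal{V}=\{1,\dots,n\}$ is strongly connected, and for every $\theta\neq\theta^*$, $$\sum_{j=1}^{n}D\big(\ell_j(\cdot\mid\theta^* )\,\|\,\ell_j(\cdot\mid\theta)\big)\neq0 .$$ If every agent runs Failure-free BFL, then for every agent $i$ and every $\theta\neq\theta^*$, $\mu_t^i(\theta)\to0$ almost surely as $t\to\infty$.
   Context: Finite hypothesis set $\Theta=\{\theta_1,\dots,\theta_m\}$, unknown true state $\theta^*\in\Theta$. Agent $i$ has finite signal space $\mathcal{S}_i$ and known likelihoods $\ell_i(\cdot\mid\theta)$ with $\ell_i(w\mid\theta)>0$ for all $w,\theta$. In iteration $t=1,2,\dots$ agent $i$ observes $s_t^i\sim\ell_i(\cdot\mid\theta^* )$, independently across agents and iterations; $\ell_i(s_{1,t}^i\mid\theta)=\prod_{r=1}^t\ell_i(s_r^i\mid\theta)$. $D(p\|q)=\sum_w p(w)\log\frac{p(w)}{q(w)}$ is the Kullback–Leibler divergence. $\mathcal{I}_i$ is the set of incoming neighbors of agent $i$. Failure-free BFL: each agent starts with the uniform belief $\mu_0^i(\theta)=1/m$; in iteration $t$ it sends $\mu_{t-1}^i$ to its outgoing neighbors, observes $s_t^i$, receives $\mu_{t-1}^j$ from all $j\in\mathcal{I}_i$, and sets for each $\theta\in\Theta$ $$\mu_t^i(\theta)=\frac{\ell_i(s_{1,t}^i\mid\theta)\prod_{j\in\mathcal{I}_i\cup\{i\}}\mu_{t-1}^j(\theta)^{1/(|\mathcal{I}_i|+1)}}{\sum_{p=1}^m\ell_i(s_{1,t}^i\mid\theta_p)\prod_{j\in\mathcal{I}_i\cup\{i\}}\mu_{t-1}^j(\theta_p)^{1/(|\mathcal{I}_i|+1)}}.$$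 *)

theory Defs
  imports "HOL-Probability.Probability"
begin

text \<open>Incoming neighbours of agent i in the directed graph with edge set E
  (an edge (j,i) means j sends to i); self-loops are ignored.\<close>
definition in_nbrs :: "('v \<times> 'v) set \<Rightarrow> 'v \<Rightarrow> 'v set" where
  "in_nbrs E i = {j. (j, i) \<in> E \<and> j \<noteq> i}"

definition strongly_connected :: "('v \<times> 'v) set \<Rightarrow> bool" where
  "strongly_connected E \<longleftrightarrow> (\<forall>i j. (i, j) \<in> E\<^sup>*)"

definition KL :: "'s set \<Rightarrow> 's pmf \<Rightarrow> 's pmf \<Rightarrow> real" where
  "KL S p q = (\<Sum>w\<in>S. pmf p w * ln (pmf p w / pmf q w))"

definition cum_lik :: "('v \<Rightarrow> 'h \<Rightarrow> 's pmf) \<Rightarrow> (nat \<Rightarrow> 'v \<Rightarrow> 's) \<Rightarrow> nat \<Rightarrow> 'v \<Rightarrow> 'h \<Rightarrow> real" where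
  "cum_lik L x t i th = (\<Prod>r\<in>{1..t}. pmf (L i th) (x r i))"

text \<open>Failure-free BFL beliefs mu_t^i(th), given the observation sequence x (x r i = s_r^i).\<close>
primrec bfl :: "('v::finite \<times> 'v) set \<Rightarrow> ('v \<Rightarrow> 'h::finite \<Rightarrow> 's pmf) \<Rightarrow> (nat \<Rightarrow> 'v \<Rightarrow> 's)
    \<Rightarrow> nat \<Rightarrow> 'v \<Rightarrow> 'h \<Rightarrow> real" where
  "bfl E L x 0 = (\<lambda>i th. 1 / real CARD('h))"
| "bfl E L x (Suc t) = (\<lambda>i th.
     (let w = (\<lambda>p. cum_lik L x (Suc t) i p *
                 (\<Prod>j\<in>insert i (in_nbrs E i).
                     bfl E L x t j p powr (1 / real (card (in_nbrs E i) + 1))))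
      in w th / (\<Sum>p\<in>UNIV. w p)))"

end

theory Submission
  imports Defs
begin

primrec mpow :: "('v::finite \<Rightarrow> 'v \<Rightarrow> real) \<Rightarrow> nat \<Rightarrow> 'v \<Rightarrow> 'v \<Rightarrow> real" where
  "mpow A 0 = (\<lambda>i j. if i = j then 1 else 0)"
| "mpow A (Suc m) = (\<lambda>i j. \<Sum>x\<in>UNIV. A i x * mpow A m x j)"

lemma sum_delta_mult: "(\<Sum>l\<in>(UNIV::'v::finite set). (if i = l then 1 else 0) * f l) = (f i::real)"
proof -
  have "(\<Sum>l\<in>(UNIV::'v set). (if i = l then 1 else 0) * f l) = (\<Sum>l\<in>UNIV. if i = l then f l else 0)"
    by (rule sum.cong) auto
  then show ?thesis by simp
qed

lemma mpow_nonneg: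
  assumes "\<And>i j. A i j \<ge> 0" shows "mpow A m i j \<ge> 0"
  by (induction m arbitrary: i j) (auto intro!: sum_nonneg mult_nonneg_nonneg assms)

lemma mpow_row:
  assumes "\<And>i. (\<Sum>j\<in>UNIV. A i j) = 1" shows "(\<Sum>j\<in>UNIV. mpow A m i j) = 1"
proof (induction m arbitrary: i)
  case 0 then show ?case by simp
next
  case (Suc m)
  have "(\<Sum>j\<in>UNIV. mpow A (Suc m) i j) = (\<Sum>j\<in>UNIV. \<Sum>x\<in>UNIV. A i x * mpow A m x j)"
    by simp
  also have "\<dots> = (\<Sum>x\<in>UNIV. \<Sum>j\<in>UNIV. A i x * mpow A m x j)"
    by (rule sum.swap)
  also have "\<dots> = (\<Sum>x\<in>UNIV. A i x * (\<Sum>j\<in>UNIV. mpow A m x j))"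
    by (simp add: sum_distrib_left)
  also have "\<dots> = 1" using Suc assms by simp
  finally show ?case .
qed

lemma mpow_add:
  "mpow A (a + b) i j = (\<Sum>l\<in>UNIV. mpow A a i l * mpow A b l j)"
proof (induction a arbitrary: i)
  case 0 then show ?case by (simp add: sum_delta_mult)
next
  case (Suc a)
  have "mpow A (Suc a + b) i j = (\<Sum>x\<in>UNIV. A i x * (\<Sum>l\<in>UNIV. mpow A a x l * mpow A b l j))"
    using Suc by simp
  also have "\<dots> = (\<Sum>x\<in>UNIV. \<Sum>l\<in>UNIV. A i x * mpow A a x l * mpow A b l j)"
    by (simp add: sum_distrib_left mult.assoc)
  also have "\<dots> = (\<Sum>l\<in>UNIV. \<Sum>x\<in>UNIV. A i x * mpow A a x l * mpow A b l j)"
    by (rule sum.swap)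
  also have "\<dots> = (\<Sum>l\<in>UNIV. (\<Sum>x\<in>UNIV. A i x * mpow A a x l) * mpow A b l j)"
    by (simp add: sum_distrib_right)
  finally show ?case by simp
qed

lemma mpow_step_ge:
  assumes nn: "\<And>i j. A i j \<ge> 0" and d: "\<And>i. A i i \<ge> \<delta>" and "\<delta> \<ge> 0"
    and k: "mpow A k i j \<ge> \<delta> ^ k"
  shows "mpow A (k + m) i j \<ge> \<delta> ^ (k + m)"
proof (induction m)
  case 0 then show ?case using k by simp
next
  case (Suc m)
  have "\<delta> ^ (k + Suc m) = \<delta> * \<delta> ^ (k + m)" by simp
  also have "\<dots> \<le> A i i * mpow A (k + m) i j"
    using Suc d nn \<open>\<delta> \<ge> 0\<close> by (intro mult_mono) auto
  also have "\<dots> \<le> (\<Sum>x\<in>UNIV. A i x * mpow A (k + m) x j)"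
    by (rule member_le_sum[of i UNIV "\<lambda>x. A i x * mpow A (k + m) x j"])
       (auto intro: mult_nonneg_nonneg nn mpow_nonneg)
  finally show ?case by simp
qed

lemma mpow_ge_later:
  assumes nn: "\<And>i j. A i j \<ge> 0" and row: "\<And>i. (\<Sum>j\<in>UNIV. A i j) = 1"
    and N: "\<And>i j. mpow A N i j \<ge> \<eta>" and "N \<le> m"
  shows "mpow A m i j \<ge> \<eta>"
proof -
  have "mpow A m i j = (\<Sum>l\<in>UNIV. mpow A (m - N) i l * mpow A N l j)"
    using mpow_add[of A "m - N" N i j] \<open>N \<le> m\<close> by simp
  also have "\<dots> \<ge> (\<Sum>l\<in>UNIV. mpow A (m - N) i l * \<eta>)"
    by (intro sum_mono mult_left_mono N mpow_nonneg nn)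
  also have "(\<Sum>l\<in>UNIV. mpow A (m - N) i l * \<eta>) = \<eta>"
    using mpow_row[OF row] by (simp add: sum_distrib_right[symmetric])
  finally show ?thesis .
qed

lemma mpow_closed:
  assumes \<psi>0: "\<And>i. \<psi> 0 i = 0"
    and \<psi>S: "\<And>t i. \<psi> (Suc t) i = Lc (Suc t) i + (\<Sum>j\<in>UNIV. A i j * \<psi> t j)"
  shows "\<psi> t i = (\<Sum>k\<in>{1..t}. \<Sum>j\<in>UNIV. mpow A (t - k) i j * Lc k j)"
proof (induction t arbitrary: i)
  case 0 then show ?case using \<psi>0 by simp
next
  case (Suc t)
  have "(\<Sum>k\<in>{1..Suc t}. \<Sum>j\<in>UNIV. mpow A (Suc t - k) i j * Lc k j)
      = (\<Sum>k\<in>{1..t}. \<Sum>j\<in>UNIV. mpow A (Suc t - k) i j * Lc k j) + Lc (Suc t) i"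
    by (simp add: sum_delta_mult)
  also have "(\<Sum>k\<in>{1..t}. \<Sum>j\<in>UNIV. mpow A (Suc t - k) i j * Lc k j)
      = (\<Sum>k\<in>{1..t}. \<Sum>j\<in>UNIV. (\<Sum>x\<in>UNIV. A i x * mpow A (t - k) x j) * Lc k j)"
    by (intro sum.cong refl) (simp add: Suc_diff_le)
  also have "\<dots> = (\<Sum>k\<in>{1..t}. \<Sum>j\<in>UNIV. \<Sum>x\<in>UNIV. A i x * mpow A (t - k) x j * Lc k j)"
    by (simp add: sum_distrib_right)
  also have "\<dots> = (\<Sum>k\<in>{1..t}. \<Sum>x\<in>UNIV. \<Sum>j\<in>UNIV. A i x * mpow A (t - k) x j * Lc k j)"
    by (rule sum.cong[OF refl], rule sum.swap)
  also have "\<dots> = (\<Sum>x\<in>UNIV. \<Sum>k\<in>{1..t}. \<Sum>j\<in>UNIV. A i x * mpow A (t - k) x j * Lc k j)"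
    by (rule sum.swap)
  also have "\<dots> = (\<Sum>x\<in>UNIV. A i x * (\<Sum>k\<in>{1..t}. \<Sum>j\<in>UNIV. mpow A (t - k) x j * Lc k j))"
    by (simp add: sum_distrib_left mult.assoc)
  finally show ?case using Suc \<psi>S[of t i] by simp
qed

lemma sum_if_le_card:
  fixes a :: real
  assumes "a \<ge> 0" "finite B" "A \<inter> Q \<subseteq> B" "finite A"
  shows "(\<Sum>k\<in>A. if k \<in> Q then a else 0) \<le> real (card B) * a"
proof -
  have "(\<Sum>k\<in>A. if k \<in> Q then a else 0) = (\<Sum>k\<in>A \<inter> Q. a)"
    using sum.inter_restrict[OF \<open>finite A\<close>, of "\<lambda>_. a" Q] by simp
  also have "\<dots> \<le> (\<Sum>k\<in>B. a)"
    using assms by (intro sum_mono2) auto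
  finally show ?thesis by simp
qed

lemma det_bound:
  fixes A :: "'v::finite \<Rightarrow> 'v \<Rightarrow> real"
  assumes nn: "\<And>i j. A i j \<ge> 0" and row: "\<And>i. (\<Sum>j\<in>UNIV. A i j) = 1"
    and \<psi>0: "\<And>i. \<psi> 0 i = 0"
    and \<psi>S: "\<And>t i. \<psi> (Suc t) i = Lc (Suc t) i + (\<Sum>j\<in>UNIV. A i j * \<psi> t j)"
    and N: "\<And>i j. mpow A N i j \<ge> \<eta>" and \<eta>: "\<eta> > 0" and d: "d > 0"
    and e_def: "e = \<eta> * d / (2 * (real N + 1))"
    and Lall: "\<And>k j. k \<ge> K \<Longrightarrow> Lc k j \<le> e * real k"
    and Ljs: "\<And>k. k \<ge> K \<Longrightarrow> Lc k js \<le> - d * real k"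
  shows "\<exists>\<alpha> \<beta>. \<beta> > 0 \<and> (\<forall>t. \<psi> t i \<le> \<alpha> - \<beta> * real t)"
proof -
  define c where "c = \<eta> * d / 2"
  define C where "C = (\<Sum>k\<in>{..<K}. \<Sum>j\<in>UNIV. \<bar>Lc k j\<bar>)"
  have c: "c > 0" using \<eta> d by (simp add: c_def)
  have e0: "e \<ge> 0" using \<eta> d by (simp add: e_def)
  have ec: "e \<le> c" unfolding e_def c_def
    by (rule divide_left_mono) (use \<eta> d in auto)
  have C0: "C \<ge> 0" unfolding C_def by (intro sum_nonneg) auto
  have LC: "Lc k j \<le> C" if "k < K" for k j
  proof -
    have "Lc k j \<le> \<bar>Lc k j\<bar>" by simp
    also have "\<dots> \<le> (\<Sum>j\<in>UNIV. \<bar>Lc k j\<bar>)"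
      by (rule member_le_sum) auto
    also have "\<dots> \<le> C" unfolding C_def
      by (rule member_le_sum[of k "{..<K}" "\<lambda>k. \<Sum>j\<in>UNIV. \<bar>Lc k j\<bar>"]) (use that in \<open>auto intro: sum_nonneg\<close>)
    finally show ?thesis .
  qed
  have termb: "(\<Sum>j\<in>UNIV. mpow A (t - k) i j * Lc k j)
      \<le> - c + (if k \<in> {..<K} then C + c else 0) + (if k \<in> {t - N<..} then e * real t + c else 0)"
    if k: "k \<in> {1..t}" for t k
  proof -
    let ?P = "\<lambda>j. mpow A (t - k) i j"
    have P0: "\<And>j. ?P j \<ge> 0" by (rule mpow_nonneg[OF nn])
    have P1: "(\<Sum>j\<in>UNIV. ?P j) = 1" by (rule mpow_row[OF row])
    show ?thesis
    proof (cases "k < K")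
      case True
      have "(\<Sum>j\<in>UNIV. ?P j * Lc k j) \<le> (\<Sum>j\<in>UNIV. ?P j * C)"
        by (intro sum_mono mult_left_mono LC True P0)
      also have "\<dots> = C" using P1 by (simp add: sum_distrib_right[symmetric])
      finally have "(\<Sum>j\<in>UNIV. ?P j * Lc k j) \<le> C" .
      moreover have "(if k \<in> {t - N<..} then e * real t + c else 0) \<ge> 0" using e0 c by simp
      moreover have "(if k \<in> {..<K} then C + c else 0) = C + c" using True by simp
      ultimately show ?thesis by linarith
    next
      case False
      then have kK: "k \<ge> K" by simp
      have upper: "(\<Sum>j\<in>UNIV. ?P j * Lc k j) \<le> e * real k"
      proof -
        have "(\<Sum>j\<in>UNIV. ?P j * Lc k j) \<le> (\<Sum>j\<in>UNIV. ?P j * (e * real k))"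
          by (intro sum_mono mult_left_mono Lall kK P0)
        also have "\<dots> = e * real k" using P1 by (simp add: sum_distrib_right[symmetric])
        finally show ?thesis .
      qed
      show ?thesis
      proof (cases "k \<in> {t - N<..}")
        case True
        have "e * real k \<le> e * real t" using k e0 by (intro mult_left_mono) auto
        then show ?thesis using upper True False c by simp
      next
        case notin: False
        then have "N \<le> t - k" using k by auto
        then have Pjs: "?P js \<ge> \<eta>" by (rule mpow_ge_later[OF nn row N])
        have Lb: "Lc k j \<le> e * real k - (if j = js then (e + d) * real k else 0)" for j
        proof (cases "j = js")
          case True
          have "e * real k - (e + d) * real k = - d * real k" by (simp add: algebra_simps)
          then show ?thesis using True Ljs[OF kK] by simp
        qed (use Lall[OF kK] in simp)
        have "(\<Sum>j\<in>UNIV. ?P j * Lc k j)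
            \<le> (\<Sum>j\<in>UNIV. ?P j * (e * real k) - (if j = js then ?P j * ((e + d) * real k) else 0))"
        proof (rule sum_mono)
          fix j :: 'v
          have "?P j * Lc k j \<le> ?P j * (e * real k - (if j = js then (e + d) * real k else 0))"
            by (rule mult_left_mono[OF Lb P0])
          then show "?P j * Lc k j \<le> ?P j * (e * real k) - (if j = js then ?P j * ((e + d) * real k) else 0)"
            by (cases "j = js") (simp_all add: right_diff_distrib)
        qed
        also have "\<dots> = e * real k - ?P js * ((e + d) * real k)"
          using P1 by (simp add: sum_subtractf sum_distrib_right[symmetric])
        also have "\<dots> \<le> e * real k - \<eta> * ((e + d) * real k)"
          using Pjs e0 d by (intro diff_left_mono mult_right_mono) auto
        also have "\<dots> \<le> e * real k - \<eta> * d * real k"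
          using \<eta> e0 by (simp add: algebra_simps)
        also have "\<dots> = (e - 2 * c) * real k" by (simp add: c_def algebra_simps)
        also have "\<dots> \<le> (e - 2 * c) * 1"
          using k ec c by (intro mult_left_mono_neg) auto
        finally show ?thesis using notin False ec by simp
      qed
    qed
  qed
  show ?thesis
  proof (intro exI conjI allI)
    have "c - real N * e = c / (real N + 1)"
      unfolding e_def c_def by (simp add: field_simps)
    then show "c - real N * e > 0" using c by simp
    fix t
    have "\<psi> t i = (\<Sum>k\<in>{1..t}. \<Sum>j\<in>UNIV. mpow A (t - k) i j * Lc k j)"
      by (rule mpow_closed[OF \<psi>0 \<psi>S])
    also have "\<dots> \<le> (\<Sum>k\<in>{1..t}. - c + (if k \<in> {..<K} then C + c else 0)
                        + (if k \<in> {t - N<..} then e * real t + c else 0))"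
      by (intro sum_mono termb)
    also have "\<dots> = - c * real t + (\<Sum>k\<in>{1..t}. if k \<in> {..<K} then C + c else 0)
                        + (\<Sum>k\<in>{1..t}. if k \<in> {t - N<..} then e * real t + c else 0)"
      by (simp add: sum.distrib sum_subtractf)
    also have "\<dots> \<le> - c * real t + real K * (C + c) + real N * (e * real t + c)"
    proof -
      have s1: "(\<Sum>k\<in>{1..t}. if k \<in> {..<K} then C + c else 0) \<le> real (card {..<K}) * (C + c)"
        by (rule sum_if_le_card) (use C0 c in auto)
      have s2: "(\<Sum>k\<in>{1..t}. if k \<in> {t - N<..} then e * real t + c else 0)
           \<le> real (card {t - N<..t}) * (e * real t + c)"
        by (rule sum_if_le_card) (use c e0 in auto)
      have s3: "real (card {t - N<..t}) \<le> real N" by simp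
      have et: "e * real t + c \<ge> 0" using e0 c by simp
      have "real (card {t - N<..t}) * (e * real t + c) \<le> real N * (e * real t + c)"
        by (rule mult_right_mono[OF s3 et])
      then show ?thesis using s1 s2 by simp
    qed
    also have "\<dots> = (real K * (C + c) + real N * c) - (c - real N * e) * real t"
      by (simp add: algebra_simps)
    finally show "\<psi> t i \<le> (real K * (C + c) + real N * c) - (c - real N * e) * real t" .
  qed
qed

lemma slln_upper:
  fixes M :: "'a measure" and s :: "nat \<Rightarrow> 'v \<Rightarrow> 'a \<Rightarrow> 's" and g :: "'s \<Rightarrow> real"
  assumes P: "prob_space M"
    and ind: "prob_space.indep_vars M (\<lambda>_. count_space UNIV) (\<lambda>(t, i). s t i) UNIV"
    and dist: "\<And>t. distr M (count_space UNIV) (s t j) = measure_pmf p"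
    and B: "\<And>w. \<bar>g w\<bar> \<le> B" and e: "e > 0"
  shows "AE \<omega> in M. eventually (\<lambda>k. (\<Sum>r\<in>{1..k}. g (s r j \<omega>))
            \<le> (measure_pmf.expectation p g + e) * real k) sequentially"
proof -
  interpret prob_space M by fact
  have meas[measurable]: "s t i \<in> measurable M (count_space UNIV)" for t i
    using ind unfolding indep_vars_def by auto
  have gm[measurable]: "g \<in> borel_measurable (count_space UNIV)" by simp
  define \<mu> where "\<mu> = measure_pmf.expectation p g"
  define a :: real where "a = - B - 1"
  define b :: real where "b = B + 1"
  have B0: "B \<ge> 0" using B[of undefined] by simp
  have ab: "a < b" using B0 by (simp add: a_def b_def)
  define r where "r = exp (-2 * e\<^sup>2 / (b - a)\<^sup>2)"
  define Ev where "Ev k = {\<omega> \<in> space M. (\<Sum>r\<in>{1..Suc k}. g (s r j \<omega>)) \<ge> real (Suc k) * \<mu> + e * real (Suc k)}" for k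
  have Ev_sets[measurable]: "Ev k \<in> sets M" for k unfolding Ev_def by measurable
  have distr_g: "distr M borel (\<lambda>\<omega>. g (s t j \<omega>)) = distr (measure_pmf p) borel g" for t
  proof -
    have "distr M borel (\<lambda>\<omega>. g (s t j \<omega>)) = distr (distr M (count_space UNIV) (s t j)) borel g"
      by (subst distr_distr) (auto simp: comp_def)
    then show ?thesis by (simp add: dist)
  qed
  have bound: "prob (Ev k) \<le> r ^ Suc k" for k
  proof -
    define I where "I = (\<lambda>r. (r, j)) ` {1..Suc k}"
    define X where "X = (\<lambda>(r, i) \<omega>. g (s r i \<omega>))"
    define Y where "Y = (\<lambda>\<omega>. g (s 0 j \<omega>))"
    have indX: "indep_vars (\<lambda>_. borel) X UNIV"
    proof -
      have "indep_vars (\<lambda>_. borel) (\<lambda>i x. g ((\<lambda>(t, i). s t i) i x)) UNIV"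
        by (rule indep_vars_compose2[OF ind]) simp
      moreover have "(\<lambda>i x. g ((\<lambda>(t, i). s t i) i x)) = X"
        by (auto simp: X_def fun_eq_iff split: prod.splits)
      ultimately show ?thesis by simp
    qed
    interpret H: Hoeffding_ineq_iid M I X Y a b "expectation Y"
    proof unfold_locales
      show "finite I" by (simp add: I_def)
      show "indep_vars (\<lambda>_. borel) X I" by (rule indep_vars_subset[OF indX]) auto
      show "distr M borel (X i) = distr M borel Y" if "i \<in> I" for i
        using that by (auto simp: I_def X_def Y_def distr_g)
      show "random_variable borel Y" unfolding Y_def by measurable
      show "AE x in M. Y x \<in> {a..b}"
      proof (rule AE_I2)
        fix x have "\<bar>g (s 0 j x)\<bar> \<le> B" by (rule B)
        then show "Y x \<in> {a..b}" by (simp add: Y_def a_def b_def abs_le_iff)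
      qed
    qed simp
    have EY: "expectation Y = \<mu>"
    proof -
      have "expectation Y = integral\<^sup>L (distr M (count_space UNIV) (s 0 j)) g"
        by (subst integral_distr) (auto simp: Y_def)
      then show ?thesis by (simp add: dist \<mu>_def)
    qed
    have cardI: "card I = Suc k" by (simp add: I_def card_image inj_on_def)
    have sumI: "(\<Sum>i\<in>I. X i x) = (\<Sum>r\<in>{1..Suc k}. g (s r j x))" for x
      by (simp add: I_def X_def sum.reindex inj_on_def)
    have "prob {x\<in>space M. (\<Sum>i\<in>I. X i x) \<ge> real (card I) * expectation Y + e * real (Suc k)}
        \<le> exp (-2 * (e * real (Suc k))\<^sup>2 / (real (card I) * (b - a)\<^sup>2))"
      using H.Hoeffding_ineq_ge[of "e * real (Suc k)"] ab e by (simp add: I_def)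
    also have "-2 * (e * real (Suc k))\<^sup>2 / (real (card I) * (b - a)\<^sup>2) = real (Suc k) * (-2 * e\<^sup>2 / (b - a)\<^sup>2)"
    proof -
      have q: "(b - a)\<^sup>2 > 0" using ab by simp
      have n: "real (Suc k) > 0" by simp
      have aux: "-2 * (e * n)\<^sup>2 / (n * q) = n * (-2 * e\<^sup>2 / q)" if "n > 0" "q > 0" for n q :: real
        using that by (simp add: power2_eq_square field_simps)
      show ?thesis unfolding cardI using aux[OF n q] by simp
    qed
    also have "exp \<dots> = r ^ Suc k" unfolding r_def by (rule exp_of_nat_mult)
    finally show ?thesis by (simp add: Ev_def sumI EY cardI)
  qed
  have r0: "r \<ge> 0" "r < 1" using ab e by (auto simp: r_def)
  have summ: "summable (\<lambda>k. measure M (Ev k))"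
  proof (rule summable_comparison_test[where g = "\<lambda>k. r ^ Suc k"])
    show "\<exists>N. \<forall>n\<ge>N. norm (measure M (Ev n)) \<le> r ^ Suc n" using bound by auto
    show "summable (\<lambda>k. r ^ Suc k)"
      using summable_geometric[of r] r0 by (simp add: summable_mult)
  qed
  have key: "(\<Sum>r\<in>{1..Suc n}. g (s r j x)) \<le> (\<mu> + e) * real (Suc n)"
    if "x \<in> space M - Ev n" for x n
  proof -
    from that have "x \<in> space M" "x \<notin> Ev n" by auto
    then have "\<not> (real (Suc n) * \<mu> + e * real (Suc n) \<le> (\<Sum>r\<in>{1..Suc n}. g (s r j x)))"
      unfolding Ev_def by blast
    moreover have "(\<mu> + e) * real (Suc n) = real (Suc n) * \<mu> + e * real (Suc n)"
      by (simp only: distrib_right mult.commute)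
    ultimately show ?thesis by linarith
  qed
  have key2: "eventually (\<lambda>k. (\<Sum>r\<in>{1..k}. g (s r j x)) \<le> (\<mu> + e) * real k) sequentially"
    if "eventually (\<lambda>n. x \<in> space M - Ev n) sequentially" for x
  proof -
    have "eventually (\<lambda>n. (\<Sum>r\<in>{1..Suc n}. g (s r j x)) \<le> (\<mu> + e) * real (Suc n)) sequentially"
      using that by (rule eventually_mono) (rule key)
    then show ?thesis
      using eventually_sequentially_Suc[of "\<lambda>k. (\<Sum>r\<in>{1..k}. g (s r j x)) \<le> (\<mu> + e) * real k"]
      by blast
  qed
  have "AE x in M. eventually (\<lambda>n. x \<in> space M - Ev n) sequentially"
    by (rule borel_cantelli_AE1) (auto simp: summ emeasure_eq_measure)
  then have "AE x in M. eventually (\<lambda>k. (\<Sum>r\<in>{1..k}. g (s r j x)) \<le> (\<mu> + e) * real k) sequentially"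
    by (rule eventually_mono) (rule key2)
  then show ?thesis by (simp only: \<mu>_def)
qed

definition Amat :: "('v::finite \<times> 'v) set \<Rightarrow> 'v \<Rightarrow> 'v \<Rightarrow> real" where
  "Amat E i j = (if j \<in> insert i (in_nbrs E i) then 1 / real (card (in_nbrs E i) + 1) else 0)"

lemma bfl_pos:
  assumes pos: "\<And>r j p. pmf (L j p) (x r j) > 0"
  shows "bfl E L x t i p > 0"
proof (induction t arbitrary: i p)
  case 0 then show ?case by simp
next
  case (Suc t)
  have w: "cum_lik L x (Suc t) i q * (\<Prod>j\<in>insert i (in_nbrs E i).
              bfl E L x t j q powr (1 / real (card (in_nbrs E i) + 1))) > 0" for q
  proof -
    have nz: "bfl E L x t j q' \<noteq> 0" for j q' using Suc.IH[of j q'] by simp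
    show ?thesis using Suc nz pos by (auto simp: cum_lik_def intro!: prod_pos mult_pos_pos)
  qed
  show ?case using w by (auto simp: Let_def intro!: divide_pos_pos sum_pos)
qed

lemma bfl_le1:
  assumes pos: "\<And>r j p. pmf (L j p) (x r j) > 0"
  shows "bfl E L x t i (p::'h::finite) \<le> 1"
proof (cases t)
  case 0 then show ?thesis by simp
next
  case (Suc t')
  define w where "w q = cum_lik L x (Suc t') i q * (\<Prod>j\<in>insert i (in_nbrs E i).
              bfl E L x t' j q powr (1 / real (card (in_nbrs E i) + 1)))" for q
  have bp: "\<And>t j q. bfl E L x t j q > 0" by (rule bfl_pos) (rule pos)
  have nz: "\<And>t j q. bfl E L x t j q \<noteq> 0" using bp by (metis less_irrefl)
  have w: "w q > 0" for q
    using bp nz pos by (auto simp: w_def cum_lik_def intro!: prod_pos mult_pos_pos)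
  have le: "w p \<le> (\<Sum>q\<in>UNIV. w q)" by (rule member_le_sum) (use w in \<open>auto intro: less_imp_le\<close>)
  have b: "bfl E L x (Suc t') i p = w p / (\<Sum>q\<in>UNIV. w q)"
    by (simp add: w_def Let_def)
  have "(\<Sum>q\<in>UNIV. w q) > 0" using w by (intro sum_pos) auto
  then show ?thesis using le Suc b by simp
qed

lemma Amat_nn: "Amat E i j \<ge> 0" by (simp add: Amat_def)

lemma card_nbrs: "card (insert i (in_nbrs E i)) = card (in_nbrs E (i::'v::finite)) + 1"
  by (simp add: in_nbrs_def)

lemma Amat_row: "(\<Sum>j\<in>UNIV. Amat E i j) = 1"
proof -
  have "(\<Sum>j\<in>UNIV. Amat E i j) = (\<Sum>j\<in>UNIV \<inter> insert i (in_nbrs E i). 1 / real (card (in_nbrs E i) + 1))"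
    by (subst sum.inter_restrict) (auto simp: Amat_def)
  also have "\<dots> = 1" by (simp add: card_nbrs del: card_insert_disjoint)
  finally show ?thesis .
qed

lemma Amat_ge:
  fixes E :: "('v::finite \<times> 'v) set"
  assumes "j \<in> insert i (in_nbrs E i)"
  shows "Amat E i j \<ge> 1 / real CARD('v::finite)"
proof -
  have "card (insert i (in_nbrs E i)) \<le> card (UNIV :: 'v set)"
    by (rule card_mono) simp_all
  then have "real (card (in_nbrs E i) + 1) \<le> real CARD('v)" by (simp only: card_nbrs)
  then show ?thesis using assms by (simp add: Amat_def frac_le)
qed

lemma bfl_ln:
  assumes pos: "\<And>r j p. pmf (L j p) (x r j) > 0"
  shows "ln (bfl E L x (Suc t) i th) - ln (bfl E L x (Suc t) i th0)
       = (\<Sum>r\<in>{1..Suc t}. ln (pmf (L i th) (x r i)) - ln (pmf (L i th0) (x r i)))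
         + (\<Sum>j\<in>UNIV. Amat E i j * (ln (bfl E L x t j th) - ln (bfl E L x t j th0)))"
proof -
  let ?c = "1 / real (card (in_nbrs E i) + 1)"
  define w where "w q = cum_lik L x (Suc t) i q * (\<Prod>j\<in>insert i (in_nbrs E i).
              bfl E L x t j q powr ?c)" for q
  have bp: "\<And>t j q. bfl E L x t j q > 0" by (rule bfl_pos) (rule pos)
  have nz: "\<And>t j q. bfl E L x t j q \<noteq> 0" using bp by (metis less_irrefl)
  have pnz: "\<And>r j p. pmf (L j p) (x r j) \<noteq> 0" using pos by (metis less_irrefl)
  have w: "w q > 0" for q
    using bp nz pos by (auto simp: w_def cum_lik_def intro!: prod_pos mult_pos_pos)
  have sw: "(\<Sum>q\<in>UNIV. w q) > 0" using w by (intro sum_pos) auto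
  have lnw: "ln (w q) = (\<Sum>r\<in>{1..Suc t}. ln (pmf (L i q) (x r i)))
       + (\<Sum>j\<in>insert i (in_nbrs E i). ?c * ln (bfl E L x t j q))" for q
  proof -
    have c1: "ln (cum_lik L x (Suc t) i q) = (\<Sum>r\<in>{1..Suc t}. ln (pmf (L i q) (x r i)))"
      unfolding cum_lik_def by (rule ln_prod) (use pnz in auto)
    have c2: "ln (\<Prod>j\<in>insert i (in_nbrs E i). bfl E L x t j q powr ?c)
        = (\<Sum>j\<in>insert i (in_nbrs E i). ln (bfl E L x t j q powr ?c))"
      by (rule ln_prod) (use nz in auto)
    have p1: "cum_lik L x (Suc t) i q > 0" unfolding cum_lik_def using pos by (intro prod_pos) auto
    have p2: "(\<Prod>j\<in>insert i (in_nbrs E i). bfl E L x t j q powr ?c) > 0"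
      using nz by (intro prod_pos) auto
    have "ln (w q) = ln (cum_lik L x (Suc t) i q) + ln (\<Prod>j\<in>insert i (in_nbrs E i). bfl E L x t j q powr ?c)"
    proof -
      have lm: "ln (a * b) = ln a + ln b" if "a > 0" "b > 0" for a b :: real
        using that by (simp add: ln_mult)
      show ?thesis unfolding w_def by (rule lm[OF p1 p2])
    qed
    then show ?thesis unfolding c1 c2 by (simp only: ln_powr)
  qed
  have b: "bfl E L x (Suc t) i q = w q / (\<Sum>q\<in>UNIV. w q)" for q
    by (simp add: w_def Let_def)
  have "ln (bfl E L x (Suc t) i th) - ln (bfl E L x (Suc t) i th0) = ln (w th) - ln (w th0)"
  proof -
    have "ln (bfl E L x (Suc t) i th) - ln (bfl E L x (Suc t) i th0)
        = (ln (w th) - ln (\<Sum>q\<in>UNIV. w q)) - (ln (w th0) - ln (\<Sum>q\<in>UNIV. w q))"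
    proof -
      have ldv: "ln (a / b) = ln a - ln b" if "a > 0" "b > 0" for a b :: real
        using that by (simp add: ln_div)
      show ?thesis unfolding b by (simp only: ldv[OF w sw])
    qed
    then show ?thesis by simp
  qed
  also have "\<dots> = (\<Sum>r\<in>{1..Suc t}. ln (pmf (L i th) (x r i)) - ln (pmf (L i th0) (x r i)))
         + (\<Sum>j\<in>insert i (in_nbrs E i). ?c * (ln (bfl E L x t j th) - ln (bfl E L x t j th0)))"
    by (simp add: lnw sum_subtractf right_diff_distrib)
  also have "(\<Sum>j\<in>insert i (in_nbrs E i). ?c * (ln (bfl E L x t j th) - ln (bfl E L x t j th0)))
      = (\<Sum>j\<in>UNIV. Amat E i j * (ln (bfl E L x t j th) - ln (bfl E L x t j th0)))"
  proof -
    let ?D = "\<lambda>j. ln (bfl E L x t j th) - ln (bfl E L x t j th0)"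
    have "(\<Sum>j\<in>UNIV. Amat E i j * ?D j) = (\<Sum>j\<in>UNIV. if j \<in> insert i (in_nbrs E i) then ?c * ?D j else 0)"
      by (rule sum.cong) (auto simp: Amat_def)
    also have "\<dots> = (\<Sum>j\<in>UNIV \<inter> insert i (in_nbrs E i). ?c * ?D j)"
      by (rule sum.inter_restrict[symmetric]) simp
    finally show ?thesis by simp
  qed
  finally show ?thesis .
qed

lemma mpow_path:
  assumes nn: "\<And>i j. A i j \<ge> 0" and adj: "\<And>y z. (y, z) \<in> E \<Longrightarrow> A z y \<ge> \<delta>"
    and "\<delta> \<ge> 0" and "(j, y) \<in> E\<^sup>*"
  shows "\<exists>k. mpow A k y j \<ge> \<delta> ^ k"
  using assms(4)
proof (induction rule: rtrancl_induct)
  case base then show ?case by (intro exI[of _ 0]) simp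
next
  case (step y z)
  then obtain k where k: "mpow A k y j \<ge> \<delta> ^ k" by blast
  have "\<delta> ^ Suc k = \<delta> * \<delta> ^ k" by simp
  also have "\<dots> \<le> A z y * mpow A k y j"
    using k adj[OF step(2)] \<open>\<delta> \<ge> 0\<close> by (intro mult_mono) auto
  also have "\<dots> \<le> (\<Sum>x\<in>UNIV. A z x * mpow A k x j)"
    by (rule member_le_sum[of y UNIV "\<lambda>x. A z x * mpow A k x j"])
       (auto intro: mult_nonneg_nonneg nn mpow_nonneg)
  finally show ?case by (intro exI[of _ "Suc k"]) simp
qed

lemma mpow_uniform:
  fixes A :: "'v::finite \<Rightarrow> 'v \<Rightarrow> real"
  assumes nn: "\<And>i j. A i j \<ge> 0" and d: "\<And>i. A i i \<ge> \<delta>" and "\<delta> \<ge> 0"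
    and ex: "\<And>i j. \<exists>k. mpow A k i j \<ge> \<delta> ^ k"
  shows "\<exists>N. \<forall>i j. mpow A N i j \<ge> \<delta> ^ N"
proof -
  define kf where "kf i j = (SOME k. mpow A k i j \<ge> \<delta> ^ k)" for i j
  have kf: "mpow A (kf i j) i j \<ge> \<delta> ^ kf i j" for i j
    unfolding kf_def by (rule someI_ex[OF ex])
  define N where "N = Max (range (\<lambda>(i, j). kf i j))"
  have le: "kf i j \<le> N" for i j
    unfolding N_def by (rule Max_ge) auto
  show ?thesis
  proof (intro exI allI)
    fix i j
    have "mpow A (kf i j + (N - kf i j)) i j \<ge> \<delta> ^ (kf i j + (N - kf i j))"
      by (rule mpow_step_ge[OF nn d \<open>\<delta> \<ge> 0\<close> kf])
    then show "mpow A N i j \<ge> \<delta> ^ N" using le[of i j] by simp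
  qed
qed

lemma final_det:
  fixes E :: "('v::finite \<times> 'v) set" and L :: "'v \<Rightarrow> 'h::finite \<Rightarrow> 's pmf"
    and x :: "nat \<Rightarrow> 'v \<Rightarrow> 's"
  assumes pos: "\<And>r j p. pmf (L j p) (x r j) > 0"
    and N: "\<And>i j. mpow (Amat E) N i j \<ge> \<eta>" and \<eta>: "\<eta> > 0" and d: "d > 0"
    and e_def: "e = \<eta> * d / (2 * (real N + 1))"
    and Lall: "eventually (\<lambda>k. \<forall>j. (\<Sum>r\<in>{1..k}. ln (pmf (L j th) (x r j)) - ln (pmf (L j th0) (x r j)))
                  \<le> e * real k) sequentially"
    and Ljs: "eventually (\<lambda>k. (\<Sum>r\<in>{1..k}. ln (pmf (L js th) (x r js)) - ln (pmf (L js th0) (x r js)))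
                  \<le> - d * real k) sequentially"
  shows "(\<lambda>t. bfl E L x t i th) \<longlonglongrightarrow> 0"
proof -
  define Lc where "Lc k j = (\<Sum>r\<in>{1..k}. ln (pmf (L j th) (x r j)) - ln (pmf (L j th0) (x r j)))" for k j
  define \<psi> where "\<psi> t j = ln (bfl E L x t j th) - ln (bfl E L x t j th0)" for t j
  obtain K1 where K1: "\<And>k. k \<ge> K1 \<Longrightarrow> \<forall>j. Lc k j \<le> e * real k"
    using Lall unfolding eventually_sequentially Lc_def by blast
  obtain K2 where K2: "\<And>k. k \<ge> K2 \<Longrightarrow> Lc k js \<le> - d * real k"
    using Ljs unfolding eventually_sequentially Lc_def by blast
  have \<psi>0: "\<And>j. \<psi> 0 j = 0" by (simp add: \<psi>_def)
  have \<psi>S: "\<And>t j. \<psi> (Suc t) j = Lc (Suc t) j + (\<Sum>l\<in>UNIV. Amat E j l * \<psi> t l)"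
    unfolding \<psi>_def Lc_def by (rule bfl_ln[OF pos])
  obtain \<alpha> \<beta> where \<beta>: "\<beta> > 0" and bd: "\<And>t. \<psi> t i \<le> \<alpha> - \<beta> * real t"
    using det_bound[OF Amat_nn Amat_row \<psi>0 \<psi>S N \<eta> d e_def, of "max K1 K2" js i] K1 K2
    by fastforce
  have up: "bfl E L x t i th \<le> exp (\<alpha> - \<beta> * real t)" for t
  proof -
    have p1: "bfl E L x t i th > 0" "bfl E L x t i th0 > 0" by (rule bfl_pos[OF pos])+
    have "bfl E L x t i th0 \<le> 1" by (rule bfl_le1[OF pos])
    then have "ln (bfl E L x t i th0) \<le> 0" using p1 by simp
    then have "ln (bfl E L x t i th) \<le> \<psi> t i" by (simp add: \<psi>_def)
    also have "\<dots> \<le> \<alpha> - \<beta> * real t" by (rule bd)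
    finally have "exp (ln (bfl E L x t i th)) \<le> exp (\<alpha> - \<beta> * real t)" by simp
    then show ?thesis using p1 by simp
  qed
  have lim: "(\<lambda>t. exp (\<alpha> - \<beta> * real t)) \<longlonglongrightarrow> 0"
  proof -
    have eq: "exp (\<alpha> - \<beta> * real t) = exp \<alpha> * exp (- \<beta>) ^ t" for t
      by (simp add: exp_diff exp_of_nat_mult[symmetric] exp_minus field_simps)
    have "(\<lambda>t. exp (- \<beta>) ^ t) \<longlonglongrightarrow> 0" using \<beta> by (intro LIMSEQ_power_zero) simp
    then have "(\<lambda>t. exp \<alpha> * exp (- \<beta>) ^ t) \<longlonglongrightarrow> exp \<alpha> * 0" by (intro tendsto_mult tendsto_const)
    then show ?thesis by (simp add: eq)
  qed
  show ?thesis
  proof (rule real_tendsto_sandwich[OF _ _ tendsto_const lim])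
    show "\<forall>\<^sub>F n in sequentially. 0 \<le> bfl E L x n i th"
    proof (intro always_eventually allI)
      fix n
      have "bfl E L x n i th > 0" by (rule bfl_pos) (rule pos)
      then show "0 \<le> bfl E L x n i th" by simp
    qed
    show "\<forall>\<^sub>F n in sequentially. bfl E L x n i th \<le> exp (\<alpha> - \<beta> * real n)"
      using up by simp
  qed
qed

theorem corollary2:
  fixes M :: "'a measure"
    and E :: "('v::finite \<times> 'v) set"
    and S :: "'v \<Rightarrow> 's set"
    and L :: "'v \<Rightarrow> 'h::finite \<Rightarrow> 's pmf"
    and \<theta>s :: 'h
    and s :: "nat \<Rightarrow> 'v \<Rightarrow> 'a \<Rightarrow> 's"
  assumes "prob_space M"
    and "strongly_connected E"
    and "\<And>i. finite (S i)"
    and "\<And>i th. set_pmf (L i th) = S i"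
    and "\<And>th. th \<noteq> \<theta>s \<Longrightarrow> (\<Sum>j\<in>UNIV. KL (S j) (L j \<theta>s) (L j th)) \<noteq> 0"
    and "prob_space.indep_vars M (\<lambda>_. count_space UNIV) (\<lambda>(t, i). s t i) UNIV"
    and "\<And>t i. distr M (count_space UNIV) (s t i) = measure_pmf (L i \<theta>s)"
  shows "\<forall>i th. th \<noteq> \<theta>s \<longrightarrow>
           (AE \<omega> in M. (\<lambda>t. bfl E L (\<lambda>r j. s r j \<omega>) t i th) \<longlonglongrightarrow> 0)"
proof (intro allI impI)
  fix i th assume th: "th \<noteq> \<theta>s"
  interpret prob_space M by (rule assms(1))
  note ind = assms(6) and dist = assms(7) and setp = assms(4) and finS = assms(3)
  have meas[measurable]: "s t j \<in> measurable M (count_space UNIV)" for t j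
    using ind unfolding indep_vars_def by auto
  define f where "f j w = ln (pmf (L j th) w) - ln (pmf (L j \<theta>s) w)" for j w
  define D where "D j = KL (S j) (L j \<theta>s) (L j th)" for j
  have ppos: "pmf (L j p) w > 0" if "w \<in> S j" for j p w
    using that setp[of j p] by (simp add: pmf_positive)
  have pzero: "pmf (L j p) w = 0" if "w \<notin> S j" for j p w
    using that setp[of j p] by (metis set_pmf_iff)
  have ED: "measure_pmf.expectation (L j \<theta>s) (f j) = - D j" for j
  proof -
    have "measure_pmf.expectation (L j \<theta>s) (f j) = (\<Sum>w\<in>S j. f j w * pmf (L j \<theta>s) w)"
      by (rule integral_measure_pmf_real) (use finS setp in auto)
    also have "\<dots> = (\<Sum>w\<in>S j. - (pmf (L j \<theta>s) w * ln (pmf (L j \<theta>s) w / pmf (L j th) w)))"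
    proof (rule sum.cong[OF refl])
      fix w assume w: "w \<in> S j"
      have lq: "ln (pmf (L j \<theta>s) w / pmf (L j th) w) = ln (pmf (L j \<theta>s) w) - ln (pmf (L j th) w)"
        using ppos[OF w, of \<theta>s] ppos[OF w, of th] by (simp add: ln_div)
      show "f j w * pmf (L j \<theta>s) w = - (pmf (L j \<theta>s) w * ln (pmf (L j \<theta>s) w / pmf (L j th) w))"
        unfolding lq f_def by (simp add: algebra_simps)
    qed
    also have "\<dots> = - D j" by (simp add: D_def KL_def sum_negf)
    finally show ?thesis .
  qed
  have D0: "D j \<ge> 0" for j
  proof -
    have "D j \<ge> (\<Sum>w\<in>S j. pmf (L j \<theta>s) w - pmf (L j th) w)"
      unfolding D_def KL_def
    proof (rule sum_mono)
      fix w assume w: "w \<in> S j"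
      define p where "p = pmf (L j \<theta>s) w"
      define q where "q = pmf (L j th) w"
      have p: "p > 0" and q: "q > 0" using ppos[OF w] by (auto simp: p_def q_def)
      have "ln (q / p) \<le> q / p - 1" using p q by (intro ln_le_minus_one) simp
      moreover have "ln (p / q) = - ln (q / p)" using p q by (simp add: ln_div)
      ultimately have "ln (p / q) \<ge> 1 - q / p" by simp
      then have "p * ln (p / q) \<ge> p * (1 - q / p)" using p by (intro mult_left_mono) auto
      also have "p * (1 - q / p) = p - q" using p by (simp add: field_simps)
      finally show "pmf (L j \<theta>s) w - pmf (L j th) w \<le> pmf (L j \<theta>s) w * ln (pmf (L j \<theta>s) w / pmf (L j th) w)"
        by (simp add: p_def q_def)
    qed
    also have "(\<Sum>w\<in>S j. pmf (L j \<theta>s) w - pmf (L j th) w) = 0"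
      using sum_pmf_eq_1[OF finS, of "L j \<theta>s"] sum_pmf_eq_1[OF finS, of "L j th"] setp
      by (simp add: sum_subtractf)
    finally show ?thesis .
  qed
  obtain js where js: "D js > 0"
  proof -
    have "(\<Sum>j\<in>UNIV. D j) \<noteq> 0" using assms(5)[OF th] by (simp add: D_def)
    then obtain j where "D j \<noteq> 0" by (meson sum.neutral)
    then have "D j > 0" using D0[of j] by linarith
    then show ?thesis by (rule that)
  qed
  define \<delta> :: real where "\<delta> = 1 / real CARD('v)"
  have \<delta>0: "\<delta> > 0" "\<delta> \<le> 1" by (auto simp: \<delta>_def)
  have self: "Amat E k k \<ge> \<delta>" for k unfolding \<delta>_def by (rule Amat_ge) simp
  have adj: "Amat E z y \<ge> \<delta>" if "(y, z) \<in> E" for y z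
    unfolding \<delta>_def by (rule Amat_ge) (use that in \<open>auto simp: in_nbrs_def\<close>)
  have ex: "\<exists>k. mpow (Amat E) k a b \<ge> \<delta> ^ k" for a b
  proof -
    have "(b, a) \<in> E\<^sup>*" using assms(2) by (simp add: strongly_connected_def)
    moreover have "0 \<le> \<delta>" using \<delta>0 by simp
    ultimately show ?thesis using mpow_path[of "Amat E" E \<delta> b a] Amat_nn adj by blast
  qed
  obtain N where N: "\<And>a b. mpow (Amat E) N a b \<ge> \<delta> ^ N"
    using mpow_uniform[OF Amat_nn self less_imp_le[OF \<delta>0(1)] ex] by blast
  define \<eta> where "\<eta> = \<delta> ^ N"
  have \<eta>: "\<eta> > 0" "\<eta> \<le> 1" using \<delta>0 by (auto simp: \<eta>_def power_le_one)
  define d where "d = D js / 2"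
  have d: "d > 0" using js by (simp add: d_def)
  define e where "e = \<eta> * d / (2 * (real N + 1))"
  have e: "e > 0" using \<eta> d by (simp add: e_def)
  have ed: "e \<le> d"
  proof -
    have "e \<le> \<eta> * d / 1" unfolding e_def using \<eta> d
      by (intro divide_left_mono) auto
    also have "\<dots> \<le> d" using \<eta> d by (simp add: mult_left_le_one_le)
    finally show ?thesis .
  qed
  define Bj where "Bj j = (\<Sum>w\<in>S j. \<bar>f j w\<bar>)" for j
  have Bb: "\<bar>f j w\<bar> \<le> Bj j" for j w
  proof (cases "w \<in> S j")
    case True then show ?thesis unfolding Bj_def
      by (rule member_le_sum[of w "S j" "\<lambda>w. \<bar>f j w\<bar>"]) (use finS in auto)
  next
    case False
    then have "f j w = 0" by (simp add: f_def pzero)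
    then show ?thesis unfolding Bj_def by (simp add: sum_nonneg)
  qed
  have AE1: "AE \<omega> in M. \<forall>j\<in>UNIV. eventually (\<lambda>k. (\<Sum>r\<in>{1..k}. f j (s r j \<omega>))
            \<le> (measure_pmf.expectation (L j \<theta>s) (f j) + e) * real k) sequentially"
  proof (rule AE_finite_allI)
    fix j :: 'v
    show "AE \<omega> in M. eventually (\<lambda>k. (\<Sum>r\<in>{1..k}. f j (s r j \<omega>))
            \<le> (measure_pmf.expectation (L j \<theta>s) (f j) + e) * real k) sequentially"
      by (rule slln_upper[OF assms(1) ind dist Bb e])
  qed simp
  have AE2: "AE \<omega> in M. \<forall>r. \<forall>j\<in>UNIV. s r j \<omega> \<in> S j"
  proof (subst AE_all_countable, intro allI AE_finite_allI)
    fix r :: nat and j :: 'v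
    have h: "AE x in measure_pmf (L j \<theta>s). x \<in> S j" using setp by (simp add: AE_measure_pmf_iff)
    have "AE x in distr M (count_space UNIV) (s r j). x \<in> S j" unfolding dist[of r j] by (rule h)
    then show "AE \<omega> in M. s r j \<omega> \<in> S j" by (subst (asm) AE_distr_iff) auto
  qed simp
  have key: "(\<lambda>t. bfl E L (\<lambda>r j. s r j \<omega>) t i th) \<longlonglongrightarrow> 0"
    if h1: "\<forall>j\<in>UNIV. eventually (\<lambda>k. (\<Sum>r\<in>{1..k}. f j (s r j \<omega>))
            \<le> (measure_pmf.expectation (L j \<theta>s) (f j) + e) * real k) sequentially"
    and h2: "\<forall>r. \<forall>j\<in>UNIV. s r j \<omega> \<in> S j" for \<omega>
  proof (rule final_det[OF _ N \<eta>(1)[unfolded \<eta>_def] d refl])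
    show "\<And>r j p. pmf (L j p) (s r j \<omega>) > 0" using h2 ppos by blast
    have h1': "eventually (\<lambda>k. (\<Sum>r\<in>{1..k}. f j (s r j \<omega>)) \<le> (- D j + e) * real k) sequentially" for j
      using h1 ED by simp
    show "eventually (\<lambda>k. \<forall>j. (\<Sum>r\<in>{1..k}. ln (pmf (L j th) (s r j \<omega>)) - ln (pmf (L j \<theta>s) (s r j \<omega>)))
            \<le> \<delta> ^ N * d / (2 * (real N + 1)) * real k) sequentially"
    proof (rule eventually_all_finite)
      fix j
      show "eventually (\<lambda>k. (\<Sum>r\<in>{1..k}. ln (pmf (L j th) (s r j \<omega>)) - ln (pmf (L j \<theta>s) (s r j \<omega>)))
            \<le> \<delta> ^ N * d / (2 * (real N + 1)) * real k) sequentially"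
        using h1'[of j]
      proof (rule eventually_mono)
        fix k assume "(\<Sum>r\<in>{1..k}. f j (s r j \<omega>)) \<le> (- D j + e) * real k"
        moreover have "(- D j + e) * real k \<le> e * real k" using D0[of j] by (intro mult_right_mono) auto
        ultimately show "(\<Sum>r\<in>{1..k}. ln (pmf (L j th) (s r j \<omega>)) - ln (pmf (L j \<theta>s) (s r j \<omega>)))
            \<le> \<delta> ^ N * d / (2 * (real N + 1)) * real k"
          by (simp add: f_def e_def \<eta>_def)
      qed
    qed
    show "eventually (\<lambda>k. (\<Sum>r\<in>{1..k}. ln (pmf (L js th) (s r js \<omega>)) - ln (pmf (L js \<theta>s) (s r js \<omega>)))
            \<le> - d * real k) sequentially"
      using h1'[of js]
    proof (rule eventually_mono)
      fix k assume "(\<Sum>r\<in>{1..k}. f js (s r js \<omega>)) \<le> (- D js + e) * real k"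
      moreover have "(- D js + e) * real k \<le> - d * real k" using ed by (intro mult_right_mono) (auto simp: d_def)
      ultimately show "(\<Sum>r\<in>{1..k}. ln (pmf (L js th) (s r js \<omega>)) - ln (pmf (L js \<theta>s) (s r js \<omega>)))
            \<le> - d * real k"
        by (simp add: f_def)
    qed
  qed
  have "AE \<omega> in M. (\<forall>j\<in>UNIV. eventually (\<lambda>k. (\<Sum>r\<in>{1..k}. f j (s r j \<omega>))
            \<le> (measure_pmf.expectation (L j \<theta>s) (f j) + e) * real k) sequentially)
         \<and> (\<forall>r. \<forall>j\<in>UNIV. s r j \<omega> \<in> S j)"
    using AE1 AE2 by (rule eventually_conj)
  then show "AE \<omega> in M. (\<lambda>t. bfl E L (\<lambda>r j. s r j \<omega>) t i th) \<longlonglongrightarrow> 0"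
    by (rule eventually_mono) (use key in blast)
qed

end
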